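(* Let $L$ be a convexity lattice. If $L$ is algebraic, or if $L$ is order-scattered, then $L$ is spatial.
   Context: A convexity lattice is a lattice isomorphic to $Cl(X,\varphi)$, the lattice of closed sets (ordered by inclusion) of a convex geometry $(X,\varphi)$, i.e. a closure operator $\varphi$ on a non-empty set $X$ with $\varphi(\emptyset)=\emptyset$ satisfying: for closed $A$ and $x\neq y$, $x\in\varphi(A\cup\{y\})$ and $x\notin A$ imply $y\notin\varphi(A\cup\{x\})$. A poset is order-scattered if it contains no copy of $\mathbb{Q}$. A complete lattice is spatial if every element is a join of completely join-irreducible elements (elements $y$ with a lower cover $y_*$ such that $z<y$ implies $z\leq y_*$). *)

theory Defs
  imports Complex_Main
begin

definition closure_operator :: "'b set \<Rightarrow> ('b set \<Rightarrow> 'b set) \<Rightarrow> bool" where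
  "closure_operator X \<phi> \<longleftrightarrow>
     (\<forall>A. A \<subseteq> X \<longrightarrow> A \<subseteq> \<phi> A \<and> \<phi> A \<subseteq> X \<and> \<phi> (\<phi> A) = \<phi> A) \<and>
     (\<forall>A B. A \<subseteq> B \<and> B \<subseteq> X \<longrightarrow> \<phi> A \<subseteq> \<phi> B)"

definition closed_sets :: "'b set \<Rightarrow> ('b set \<Rightarrow> 'b set) \<Rightarrow> 'b set set" where
  "closed_sets X \<phi> = {A. A \<subseteq> X \<and> \<phi> A = A}"

definition convex_geometry :: "'b set \<Rightarrow> ('b set \<Rightarrow> 'b set) \<Rightarrow> bool" where
  "convex_geometry X \<phi> \<longleftrightarrow>
     X \<noteq> {} \<and> closure_operator X \<phi> \<and> \<phi> {} = {} \<and>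
     (\<forall>A \<in> closed_sets X \<phi>. \<forall>x\<in>X. \<forall>y\<in>X.
        x \<noteq> y \<and> x \<in> \<phi> (A \<union> {y}) \<and> x \<notin> A \<longrightarrow> y \<notin> \<phi> (A \<union> {x}))"

definition order_iso_to_closed_sets ::
  "('a::order \<Rightarrow> 'b set) \<Rightarrow> 'b set \<Rightarrow> ('b set \<Rightarrow> 'b set) \<Rightarrow> bool" where
  "order_iso_to_closed_sets f X \<phi> \<longleftrightarrow>
     bij_betw f UNIV (closed_sets X \<phi>) \<and> (\<forall>a b. a \<le> b \<longleftrightarrow> f a \<subseteq> f b)"

definition compact_element :: "'a::complete_lattice \<Rightarrow> bool" where
  "compact_element x \<longleftrightarrow>
     (\<forall>S. x \<le> Sup S \<longrightarrow> (\<exists>F. finite F \<and> F \<subseteq> S \<and> x \<le> Sup F))"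

definition algebraic_lattice :: "'a::complete_lattice itself \<Rightarrow> bool" where
  "algebraic_lattice _ \<longleftrightarrow> (\<forall>x::'a. x = Sup {c. compact_element c \<and> c \<le> x})"

definition order_scattered :: "'a::order itself \<Rightarrow> bool" where
  "order_scattered _ \<longleftrightarrow> \<not> (\<exists>f :: rat \<Rightarrow> 'a. \<forall>p q. p < q \<longleftrightarrow> f p < f q)"

definition completely_join_irreducible :: "'a::complete_lattice \<Rightarrow> bool" where
  "completely_join_irreducible y \<longleftrightarrow>
     (\<exists>c. c < y \<and> (\<forall>z. z < y \<longrightarrow> z \<le> c))"

definition spatial :: "'a::complete_lattice itself \<Rightarrow> bool" where
  "spatial _ \<longleftrightarrow> (\<forall>x::'a. x = Sup {y. completely_join_irreducible y \<and> y \<le> x})"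

end

theory Submission
  imports Defs
begin

locale dense_iv =
  fixes a b :: "'a::complete_lattice"
  assumes ab: "a < b"
  and dns: "\<And>u v. a \<le> u \<Longrightarrow> u < v \<Longrightarrow> v \<le> b \<Longrightarrow> \<exists>w. u < w \<and> w < v"
begin

definition mid :: "'a \<Rightarrow> 'a \<Rightarrow> 'a" where "mid u v = (SOME w. u < w \<and> w < v)"

lemma mid: "a \<le> u \<Longrightarrow> u < v \<Longrightarrow> v \<le> b \<Longrightarrow> u < mid u v \<and> mid u v < v"
  unfolding mid_def using dns by (metis (mono_tags, lifting) someI_ex)

fun sq :: "nat \<Rightarrow> nat \<Rightarrow> 'a" where
  "sq 0 k = (if k = 0 then a else b)"
| "sq (Suc n) k = (if even k then sq n (k div 2) else mid (sq n (k div 2)) (sq n (Suc (k div 2))))"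

lemma inv: "(\<forall>k \<le> 2^n. a \<le> sq n k \<and> sq n k \<le> b) \<and> (\<forall>k < 2^n. sq n k < sq n (Suc k))"
proof (induction n)
  case 0
  then show ?case using ab by auto
next
  case (Suc n)
  have B: "a \<le> sq (Suc n) k \<and> sq (Suc n) k \<le> b" if "k \<le> 2^Suc n" for k
  proof (cases "even k")
    case True
    then show ?thesis using Suc that by auto
  next
    case False
    then have "k div 2 < 2^n" using that by (auto elim!: oddE)
    then have "a \<le> sq n (k div 2)" "sq n (k div 2) < sq n (Suc (k div 2))" "sq n (Suc (k div 2)) \<le> b"
      using Suc by auto
    then show ?thesis using mid[of "sq n (k div 2)" "sq n (Suc (k div 2))"] False
      by (auto intro: order.trans less_imp_le)
  qed
  have A: "sq (Suc n) k < sq (Suc n) (Suc k)" if "k < 2^Suc n" for k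
  proof (cases "even k")
    case True
    then have "k div 2 < 2^n" using that by (auto elim!: evenE)
    then have "a \<le> sq n (k div 2)" "sq n (k div 2) < sq n (Suc (k div 2))" "sq n (Suc (k div 2)) \<le> b"
      using Suc by auto
    moreover have "Suc k div 2 = k div 2" using True by presburger
    ultimately show ?thesis using mid[of "sq n (k div 2)" "sq n (Suc (k div 2))"] True by auto
  next
    case False
    then have "k div 2 < 2^n" using that by (auto elim!: oddE)
    then have "a \<le> sq n (k div 2)" "sq n (k div 2) < sq n (Suc (k div 2))" "sq n (Suc (k div 2)) \<le> b"
      using Suc by auto
    moreover have "Suc k div 2 = Suc (k div 2)" using False by presburger
    ultimately show ?thesis using mid[of "sq n (k div 2)" "sq n (Suc (k div 2))"] False by auto
  qed
  show ?case using A B by blast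
qed

lemma mono_sq: "i < j \<Longrightarrow> j \<le> 2^n \<Longrightarrow> sq n i < sq n j"
proof (induction j)
  case 0 then show ?case by simp
next
  case (Suc j)
  have s: "sq n j < sq n (Suc j)" using inv[of n] Suc.prems by auto
  show ?case
  proof (cases "i = j")
    case True then show ?thesis using s by simp
  next
    case False then show ?thesis using Suc s by (auto intro: less_trans)
  qed
qed

lemma refine: "sq (n + m) (k * 2^m) = sq n k"
  by (induction m) (auto simp: mult.commute mult.left_commute)

lemma cmp: assumes "k \<le> 2^n" "k' \<le> 2^n'" "(of_nat k / 2^n :: rat) < of_nat k' / 2^n'"
  shows "sq n k < sq n' k'"
proof -
  have "(of_nat k * 2^n' :: rat) < of_nat k' * 2^n" using assms(3)
    by (simp add: divide_simps)
  then have lt: "k * 2^n' < k' * 2^n"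
    by (metis (mono_tags, lifting) of_nat_less_iff of_nat_mult of_nat_numeral of_nat_power)
  have le: "k' * 2^n \<le> 2^(n' + n)" using assms(2) by (simp add: power_add)
  have "sq n k = sq (n + n') (k * 2^n')" by (rule refine[symmetric])
  also have "\<dots> < sq (n + n') (k' * 2^n)" using lt le by (intro mono_sq) (auto simp: add.commute)
  also have "\<dots> = sq n' k'" using refine[of n' n k'] by (simp add: add.commute)
  finally show ?thesis .
qed

definition h :: "rat \<Rightarrow> 'a" where
  "h r = Sup {sq n k | n k. k \<le> 2^n \<and> (of_nat k / 2^n :: rat) < r}"

lemma between: assumes "0 \<le> r" "r < s" "s \<le> 1"
  shows "\<exists>n k. Suc k \<le> 2^n \<and> r < of_nat k / 2^n \<and> (of_nat (Suc k) / 2^n :: rat) < s"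
proof -
  obtain n :: nat where n: "2 / (s - r) < of_nat n" using reals_Archimedean2 by blast
  have "of_nat n < (2::rat)^n" by (rule of_nat_less_two_power)
  with n have "2 / (s - r) < 2^n" by linarith
  then have d: "2 < (s - r) * 2^n" using assms by (simp add: divide_simps mult.commute)
  define k where "k = nat (floor (r * 2^n)) + 1"
  have fl: "0 \<le> floor (r * 2^n)" using assms by simp
  have k1: "r * 2^n < of_nat k" unfolding k_def using fl
    by (simp add: of_nat_nat) linarith
  have k2: "of_nat k \<le> r * 2^n + 1" unfolding k_def using fl
    by (simp add: of_nat_nat)
  have k3: "of_nat (Suc k) < s * 2^n" using k2 d by (simp add: algebra_simps)
  have "s * 2^n \<le> (2::rat)^n" using assms(3) by (simp add: mult_left_le_one_le)
  then have "of_nat (Suc k) < (2::rat)^n" using k3 by linarith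
  then have "Suc k \<le> 2^n"
    by (metis less_imp_le of_nat_le_iff of_nat_numeral of_nat_power of_nat_less_iff)
  moreover have "r < of_nat k / 2^n" using k1 by (simp add: divide_simps)
  moreover have "(of_nat (Suc k) / 2^n :: rat) < s" using k3 by (simp add: divide_simps)
  ultimately show ?thesis by blast
qed

lemma h_mono: assumes "0 \<le> r" "r < s" "s \<le> 1" shows "h r < h s"
proof -
  obtain n k where nk: "Suc k \<le> 2^n" "r < of_nat k / 2^n" "(of_nat (Suc k) / 2^n :: rat) < s"
    using between[OF assms] by blast
  have "h r \<le> sq n k" unfolding h_def
  proof (rule Sup_least)
    fix x assume "x \<in> {sq n k | n k. k \<le> 2^n \<and> (of_nat k / 2^n :: rat) < r}"
    then obtain n' k' where "x = sq n' k'" "k' \<le> 2^n'" "(of_nat k' / 2^n' :: rat) < r" by blast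
    then show "x \<le> sq n k" using cmp[of k' n' k n] nk by auto
  qed
  also have "sq n k < sq n (Suc k)" using mono_sq[of k "Suc k" n] nk by auto
  also have "sq n (Suc k) \<le> h s" unfolding h_def using nk by (intro Sup_upper) blast
  finally show ?thesis .
qed

definition sg :: "rat \<Rightarrow> rat" where "sg q = (1 + q / (1 + \<bar>q\<bar>)) / 2"

lemma sg_range: "0 \<le> sg q \<and> sg q \<le> 1"
  unfolding sg_def by (auto simp: divide_simps abs_if)

lemma sg_mono: assumes "p < q" shows "sg p < sg q"
proof -
  have "p * (1 + \<bar>q\<bar>) < q * (1 + \<bar>p\<bar>)"
  proof (cases "0 \<le> p")
    case True then show ?thesis using assms by (simp add: algebra_simps)
  next
    case False
    show ?thesis
    proof (cases "0 \<le> q")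
      case True
      have "p * (1 + \<bar>q\<bar>) < 0" using False True by (simp add: mult_neg_pos add_nonneg_pos)
      moreover have "0 \<le> q * (1 + \<bar>p\<bar>)" using True by simp
      ultimately show ?thesis by linarith
    next
      case F2: False then show ?thesis using assms False by (simp add: algebra_simps)
    qed
  qed
  then have "p / (1 + \<bar>p\<bar>) < q / (1 + \<bar>q\<bar>)"
    by (simp add: divide_simps add_pos_nonneg mult.commute)
  then show ?thesis unfolding sg_def by (intro divide_strict_right_mono) auto
qed

lemma embed: "\<exists>g :: rat \<Rightarrow> 'a. \<forall>p q. p < q \<longleftrightarrow> g p < g q"
proof -
  have sm: "p < q \<Longrightarrow> h (sg p) < h (sg q)" for p q :: rat
    using h_mono sg_mono sg_range by blast
  show ?thesis
  proof (intro exI allI iffI)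
    fix p q :: rat assume "p < q" then show "h (sg p) < h (sg q)" by (rule sm)
  next
    fix p q :: rat assume *: "h (sg p) < h (sg q)"
    show "p < q"
    proof (rule ccontr)
      assume "\<not> p < q"
      then have "q < p \<or> q = p" by auto
      then show False using * sm[of q p] by auto
    qed
  qed
qed
end


locale CG =
  fixes f :: "'a::complete_lattice \<Rightarrow> 'b set" and X :: "'b set" and \<phi> :: "'b set \<Rightarrow> 'b set"
  assumes cg: "convex_geometry X \<phi>" and iso: "order_iso_to_closed_sets f X \<phi>"
begin

lemma clo: "closure_operator X \<phi>" using cg unfolding convex_geometry_def by (elim conjE)
lemma co1: "\<forall>A. A \<subseteq> X \<longrightarrow> A \<subseteq> \<phi> A \<and> \<phi> A \<subseteq> X \<and> \<phi> (\<phi> A) = \<phi> A"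
  using clo unfolding closure_operator_def by (elim conjE)
lemma co2: "\<forall>A B. A \<subseteq> B \<and> B \<subseteq> X \<longrightarrow> \<phi> A \<subseteq> \<phi> B"
  using clo unfolding closure_operator_def by (elim conjE)
lemma ext: "A \<subseteq> X \<Longrightarrow> A \<subseteq> \<phi> A" using co1 by simp
lemma clX: "A \<subseteq> X \<Longrightarrow> \<phi> A \<subseteq> X" using co1 by simp
lemma idem: "A \<subseteq> X \<Longrightarrow> \<phi> (\<phi> A) = \<phi> A" using co1 by simp
lemma mono: "A \<subseteq> B \<Longrightarrow> B \<subseteq> X \<Longrightarrow> \<phi> A \<subseteq> \<phi> B" using co2 by simp
lemma least: "A \<subseteq> B \<Longrightarrow> B \<subseteq> X \<Longrightarrow> \<phi> B = B \<Longrightarrow> \<phi> A \<subseteq> B" using mono[of A B] by simp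
lemma ax: "A \<subseteq> X \<Longrightarrow> \<phi> A = A \<Longrightarrow> x \<in> X \<Longrightarrow> y \<in> X \<Longrightarrow> x \<noteq> y \<Longrightarrow> x \<in> \<phi> (A \<union> {y}) \<Longrightarrow> x \<notin> A
   \<Longrightarrow> y \<notin> \<phi> (A \<union> {x})"
proof -
  have "\<forall>A \<in> closed_sets X \<phi>. \<forall>x\<in>X. \<forall>y\<in>X.
        x \<noteq> y \<and> x \<in> \<phi> (A \<union> {y}) \<and> x \<notin> A \<longrightarrow> y \<notin> \<phi> (A \<union> {x})"
    using cg unfolding convex_geometry_def by (elim conjE)
  moreover assume a: "A \<subseteq> X" "\<phi> A = A" "x \<in> X" "y \<in> X" "x \<noteq> y" "x \<in> \<phi> (A \<union> {y})" "x \<notin> A"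
  moreover have "A \<in> closed_sets X \<phi>" using a(1,2) unfolding closed_sets_def by simp
  ultimately show "y \<notin> \<phi> (A \<union> {x})" by simp
qed

lemma fX: "f x \<subseteq> X" and fcl: "\<phi> (f x) = f x"
  using iso unfolding order_iso_to_closed_sets_def bij_betw_def closed_sets_def by auto
lemma fle: "a \<le> b \<longleftrightarrow> f a \<subseteq> f b" using iso unfolding order_iso_to_closed_sets_def by blast
lemma fless: "a < b \<longleftrightarrow> f a \<subset> f b" by (simp add: less_le_not_le subset_not_subset_eq fle)
lemma fsurj: "A \<subseteq> X \<Longrightarrow> \<phi> A = A \<Longrightarrow> \<exists>x. f x = A"
proof -
  assume "A \<subseteq> X" "\<phi> A = A"
  then have "A \<in> closed_sets X \<phi>" unfolding closed_sets_def by blast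
  moreover have "f ` UNIV = closed_sets X \<phi>" using iso unfolding order_iso_to_closed_sets_def bij_betw_def by blast
  ultimately have "A \<in> range f" by simp
  then show "\<exists>x. f x = A" by (auto simp: image_iff)
qed

lemma fSup: "f (Sup S) = \<phi> (\<Union>(f ` S))"
proof -
  let ?U = "\<Union>(f ` S)"
  have UX: "?U \<subseteq> X" using fX by blast
  obtain z where z: "f z = \<phi> ?U" using fsurj[OF clX[OF UX] idem[OF UX]] by blast
  have "s \<le> z" if "s \<in> S" for s
  proof -
    have "f s \<subseteq> ?U" using that by blast
    also have "\<dots> \<subseteq> f z" using ext[OF UX] z by simp
    finally show ?thesis using fle by simp
  qed
  then have 1: "Sup S \<le> z" by (rule Sup_least)
  have "f s \<subseteq> f (Sup S)" if "s \<in> S" for s using fle[THEN iffD1, OF Sup_upper[OF that]] .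
  then have "?U \<subseteq> f (Sup S)" by blast
  then have "\<phi> ?U \<subseteq> f (Sup S)" using least[OF _ fX fcl] by simp
  then have "z \<le> Sup S" using z fle by simp
  with 1 have "Sup S = z" by simp
  then show ?thesis using z by simp
qed

definition G where "G = {q \<in> X. q \<notin> \<phi> (\<phi> {q} - {q})}"

lemma pt: "y \<in> X \<Longrightarrow> \<exists>z. f z = \<phi> {y}"
proof -
  assume "y \<in> X" then have "{y} \<subseteq> X" by simp
  then show ?thesis using fsurj[OF clX[of "{y}"] idem[of "{y}"]] by blast
qed

lemma closed_sub: "x \<in> X \<Longrightarrow> x \<in> C \<Longrightarrow> C \<subseteq> X \<Longrightarrow> \<phi> C = C \<Longrightarrow> \<phi> {x} \<subseteq> C"
  using least[of "{x}" C] by simp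

lemma cji: assumes "q \<in> G" "f y = \<phi> {q}" shows "completely_join_irreducible y"
proof -
  have qX: "q \<in> X" and nq: "q \<notin> \<phi> (\<phi> {q} - {q})" using assms(1) unfolding G_def by auto
  have sX: "\<phi> {q} \<subseteq> X" using clX qX by blast
  have "\<phi> (\<phi> {q} - {q}) \<subseteq> \<phi> {q}" using mono[of "\<phi> {q} - {q}" "\<phi> {q}"] idem[of "{q}"] qX sX by auto
  then have "\<phi> (\<phi> {q} - {q}) = \<phi> {q} - {q}" using nq ext[of "\<phi> {q} - {q}"] sX by blast
  then obtain c where c: "f c = \<phi> {q} - {q}" using fsurj[of "\<phi> {q} - {q}"] sX by blast
  have qin: "q \<in> \<phi> {q}" using ext qX by blast
  have "c < y" using fless c assms(2) qin by auto
  moreover have "z \<le> c" if "z < y" for z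
  proof -
    have "f z \<subset> \<phi> {q}" using that fless assms(2) by simp
    moreover have "q \<notin> f z"
    proof
      assume "q \<in> f z"
      then have "\<phi> {q} \<subseteq> f z" using closed_sub qX fX fcl by blast
      then show False using \<open>f z \<subset> \<phi> {q}\<close> by blast
    qed
    ultimately show ?thesis using c fle by auto
  qed
  ultimately show ?thesis unfolding completely_join_irreducible_def by blast
qed

lemma spatial_of_key: assumes key: "\<And>C. C \<subseteq> X \<Longrightarrow> \<phi> C = C \<Longrightarrow> C \<subseteq> \<phi> (G \<inter> C)"
  shows "spatial TYPE('a)"
  unfolding spatial_def
proof
  fix x :: 'a
  let ?S = "{y. completely_join_irreducible y \<and> y \<le> x}"
  have 1: "Sup ?S \<le> x" by (rule Sup_least) blast
  have UX: "\<Union>(f ` ?S) \<subseteq> X" using fX by blast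
  have "G \<inter> f x \<subseteq> \<Union>(f ` ?S)"
  proof
    fix q assume q: "q \<in> G \<inter> f x"
    then have qX: "q \<in> X" unfolding G_def by auto
    obtain y where y: "f y = \<phi> {q}" using pt qX by blast
    have "completely_join_irreducible y" using cji q y by blast
    moreover have "y \<le> x" using fle y closed_sub[OF qX _ fX fcl] q by auto
    moreover have "q \<in> f y" using y ext qX by blast
    ultimately show "q \<in> \<Union>(f ` ?S)" by blast
  qed
  then have "\<phi> (G \<inter> f x) \<subseteq> f (Sup ?S)" using mono[OF _ UX] fSup by simp
  then have "f x \<subseteq> f (Sup ?S)" using key[OF fX fcl] by blast
  then have "x \<le> Sup ?S" using fle by simp
  with 1 show "x = Sup ?S" by simp
qed

lemma key_scattered: assumes sc: "order_scattered TYPE('a)" and CX: "C \<subseteq> X" and Ccl: "\<phi> C = C"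
  shows "C \<subseteq> \<phi> (G \<inter> C)"
proof (rule ccontr)
  assume nc: "\<not> C \<subseteq> \<phi> (G \<inter> C)"
  let ?D = "\<phi> (G \<inter> C)"
  have GX: "G \<inter> C \<subseteq> X" using CX by blast
  have DC: "?D \<subseteq> C" by (rule least[OF _ CX Ccl]) blast
  obtain d where d: "f d = ?D" using fsurj[of ?D] clX[OF GX] idem[OF GX] by blast
  obtain c where c: "f c = C" using fsurj CX Ccl by blast
  have dc: "d < c" using fless d c DC nc by auto
  have dns: "\<exists>w. u < w \<and> w < v" if uv: "d \<le> u" "u < v" "v \<le> c" for u v
  proof -
    let ?U = "f u" and ?V = "f v"
    have DU: "?D \<subseteq> ?U" using uv fle d by simp
    have UV: "?U \<subset> ?V" using uv fless by simp
    have VC: "?V \<subseteq> C" using uv fle c by simp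
    have UX: "?U \<subseteq> X" and VX: "?V \<subseteq> X" and Ucl: "\<phi> ?U = ?U" and Vcl: "\<phi> ?V = ?V" using fX fcl by auto
    obtain x where x: "x \<in> ?V" "x \<notin> ?U" using UV by blast
    have xX: "x \<in> X" using x VX by blast
    have xG: "x \<notin> G"
    proof
      assume "x \<in> G"
      then have "x \<in> ?D" using ext[OF GX] x VC by blast
      then show False using DU x by blast
    qed
    have ok: "\<exists>w. u < w \<and> w < v" if W: "W \<subseteq> X" "\<phi> W = W" "?U \<subset> W" "W \<subset> ?V" for W
    proof -
      obtain w where "f w = W" using fsurj[OF W(1) W(2)] by blast
      then show ?thesis using W fless by auto
    qed
    have UxX: "?U \<union> {x} \<subseteq> X" using UX xX by blast
    let ?W0 = "\<phi> (?U \<union> {x})"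
    have "?U \<union> {x} \<subseteq> ?V" using UV x by blast
    then have W0V: "?W0 \<subseteq> ?V" by (rule least[OF _ VX Vcl])
    have UW0: "?U \<subset> ?W0" using ext[OF UxX] x by blast
    show ?thesis
    proof (cases "?W0 = ?V")
      case False
      then show ?thesis using ok[of ?W0] clX[OF UxX] idem[OF UxX] W0V UW0 by blast
    next
      case True
      have xin: "x \<in> \<phi> (\<phi> {x} - {x})" using xG xX unfolding G_def by blast
      have sX: "\<phi> {x} \<subseteq> X" using clX xX by blast
      obtain y where y: "y \<in> \<phi> {x}" "y \<noteq> x" "y \<notin> ?U"
      proof (rule ccontr)
        assume "\<not> thesis"
        then have "\<phi> {x} - {x} \<subseteq> ?U" using that by blast
        then have "\<phi> (\<phi> {x} - {x}) \<subseteq> ?U" by (rule least[OF _ UX Ucl])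
        then show False using xin x by blast
      qed
      have yX: "y \<in> X" using y sX by blast
      have yV: "y \<in> ?V" using y closed_sub[OF xX x(1) VX Vcl] by blast
      have UyX: "?U \<union> {y} \<subseteq> X" using UX yX by blast
      let ?W1 = "\<phi> (?U \<union> {y})"
      have "?U \<union> {y} \<subseteq> ?V" using UV yV by blast
      then have W1V: "?W1 \<subseteq> ?V" by (rule least[OF _ VX Vcl])
      have UW1: "?U \<subset> ?W1" using ext[OF UyX] y by blast
      have "x \<notin> ?W1" using ax[OF UX Ucl yX xX y(2)] True yV y(3) by blast
      then have "?W1 \<subset> ?V" using W1V x by blast
      then show ?thesis using ok[of ?W1] clX[OF UyX] idem[OF UyX] UW1 by blast
    qed
  qed
  interpret dense_iv d c using dc dns by unfold_locales auto
  from embed sc show False unfolding order_scattered_def by blast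
qed

lemma AE: assumes "finite F" shows "A \<subseteq> X \<Longrightarrow> \<phi> A = A \<Longrightarrow> x \<in> X \<Longrightarrow> x \<notin> A
   \<Longrightarrow> F \<subseteq> \<phi> (A \<union> {x}) - {x} \<Longrightarrow> x \<notin> \<phi> (A \<union> F)"
  using assms
proof (induction F arbitrary: A rule: finite_induct)
  case empty
  then show ?case by simp
next
  case (insert y F)
  have AX: "A \<subseteq> X" and Acl: "\<phi> A = A" and xX: "x \<in> X" and xA: "x \<notin> A"
    and yF: "insert y F \<subseteq> \<phi> (A \<union> {x}) - {x}" using insert.prems by auto
  have AxX: "A \<union> {x} \<subseteq> X" using AX xX by simp
  have yK: "y \<in> \<phi> (A \<union> {x})" and yx: "y \<noteq> x" using yF by auto
  have FK: "F \<subseteq> \<phi> (A \<union> {x}) - {x}" using yF by simp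
  have yX: "y \<in> X" using yK clX[OF AxX] by (rule subsetD[rotated])
  show ?case
  proof (cases "y \<in> A")
    case True
    then have eq: "A \<union> insert y F = A \<union> F" by blast
    show ?thesis unfolding eq by (rule insert.IH[OF AX Acl xX xA FK])
  next
    case False
    let ?A1 = "\<phi> (A \<union> {y})"
    have AyX: "A \<union> {y} \<subseteq> X" using AX yX by simp
    have xA1: "x \<notin> ?A1" by (rule ax[OF AX Acl yX xX yx yK False])
    have A1X: "?A1 \<subseteq> X" by (rule clX[OF AyX])
    have A1cl: "\<phi> ?A1 = ?A1" by (rule idem[OF AyX])
    have AyA1: "A \<union> {y} \<subseteq> ?A1" by (rule ext[OF AyX])
    have A1xX: "?A1 \<union> {x} \<subseteq> X" using A1X xX by simp
    have "A \<union> {x} \<subseteq> ?A1 \<union> {x}" using AyA1 by blast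
    then have "\<phi> (A \<union> {x}) \<subseteq> \<phi> (?A1 \<union> {x})" by (rule mono[OF _ A1xX])
    then have "F \<subseteq> \<phi> (?A1 \<union> {x}) - {x}" using FK by blast
    then have nx: "x \<notin> \<phi> (?A1 \<union> F)" by (rule insert.IH[OF A1X A1cl xX xA1])
    have FX: "F \<subseteq> X" using FK clX[OF AxX] by blast
    have A1FX: "?A1 \<union> F \<subseteq> X" using A1X FX by simp
    have "A \<union> insert y F \<subseteq> ?A1 \<union> F" using AyA1 by blast
    then have "\<phi> (A \<union> insert y F) \<subseteq> \<phi> (?A1 \<union> F)" by (rule mono[OF _ A1FX])
    then show ?thesis using nx by blast
  qed
qed

lemma cover: assumes cc: "compact_element c" and BX: "B \<subseteq> X" and sub: "f c \<subseteq> \<phi> B"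
  shows "\<exists>F. finite F \<and> F \<subseteq> B \<and> f c \<subseteq> \<phi> F"
proof -
  define pt where "pt y = (SOME z. f z = \<phi> {y})" for y
  have ptf: "f (pt y) = \<phi> {y}" if "y \<in> X" for y
    unfolding pt_def using pt[OF that] by (rule someI_ex)
  have UX: "\<Union>(f ` pt ` B) \<subseteq> X" using fX by blast
  have "B \<subseteq> \<Union>(f ` pt ` B)"
  proof
    fix y assume y: "y \<in> B"
    then have yX: "y \<in> X" using BX by blast
    then have "y \<in> f (pt y)" using ptf[OF yX] ext[of "{y}"] by simp
    then show "y \<in> \<Union>(f ` pt ` B)" using y by blast
  qed
  then have "\<phi> B \<subseteq> \<phi> (\<Union>(f ` pt ` B))" by (rule mono[OF _ UX])
  then have "f c \<subseteq> f (Sup (pt ` B))" using sub fSup[of "pt ` B"] by simp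
  then have "c \<le> Sup (pt ` B)" using fle by simp
  then obtain F0 where F0: "finite F0" "F0 \<subseteq> pt ` B" "c \<le> Sup F0"
    using cc unfolding compact_element_def by blast
  obtain F where F: "F \<subseteq> B" "finite F" "F0 = pt ` F" using finite_subset_image[OF F0(1,2)] by blast
  have FX: "F \<subseteq> X" using F(1) BX by (rule order.trans)
  have "\<Union>(f ` F0) \<subseteq> \<phi> F"
  proof
    fix z assume "z \<in> \<Union>(f ` F0)"
    then obtain y where y: "y \<in> F" "z \<in> f (pt y)" using F(3) by blast
    have yX: "y \<in> X" using y(1) FX by blast
    have "{y} \<subseteq> F" using y(1) by simp
    then have "\<phi> {y} \<subseteq> \<phi> F" by (rule mono[OF _ FX])
    then show "z \<in> \<phi> F" using y(2) ptf[OF yX] by blast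
  qed
  then have "\<phi> (\<Union>(f ` F0)) \<subseteq> \<phi> F" by (rule least[OF _ clX[OF FX] idem[OF FX]])
  then have "f (Sup F0) \<subseteq> \<phi> F" using fSup by simp
  moreover have "f c \<subseteq> f (Sup F0)" using F0(3) fle by simp
  ultimately have "f c \<subseteq> \<phi> F" by (rule order.trans[rotated])
  then show ?thesis using F by blast
qed

lemma compact_key: assumes cc: "compact_element c"
  shows "f c \<subseteq> \<phi> (G \<inter> f c)"
proof -
  let ?K = "f c"
  have KX: "?K \<subseteq> X" and Kcl: "\<phi> ?K = ?K" by (rule fX, rule fcl)
  have GKX: "G \<inter> ?K \<subseteq> X" using KX by blast
  have main: "\<And>F. card F = n \<Longrightarrow> finite F \<Longrightarrow> F \<subseteq> ?K \<Longrightarrow> \<phi> F = ?K \<Longrightarrow> ?K \<subseteq> \<phi> (G \<inter> ?K)" for n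
  proof (induction n rule: less_induct)
    case (less n F)
    have cF: "card F = n" and fF: "finite F" and FK: "F \<subseteq> ?K" and FKeq: "\<phi> F = ?K" using less.prems by auto
    have FX: "F \<subseteq> X" using FK KX by (rule order.trans)
    show ?case
    proof (cases "\<exists>x\<in>F. x \<in> \<phi> (F - {x})")
      case True
      then obtain x where x: "x \<in> F" "x \<in> \<phi> (F - {x})" by blast
      have FxX: "F - {x} \<subseteq> X" using FX by blast
      have "F \<subseteq> \<phi> (F - {x})" using x ext[OF FxX] by blast
      then have "\<phi> F \<subseteq> \<phi> (F - {x})" by (rule least[OF _ clX[OF FxX] idem[OF FxX]])
      moreover have "\<phi> (F - {x}) \<subseteq> \<phi> F" by (rule mono[OF _ FX]) blast
      ultimately have e: "\<phi> (F - {x}) = ?K" using FKeq by simp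
      have "0 < card F" using x(1) fF by (auto simp: card_gt_0_iff)
      then have lt: "card (F - {x}) < n" using x(1) fF cF by simp
      show ?thesis by (rule less.IH[OF lt refl _ _ e]) (use fF FK in auto)
    next
      case False
      have "F \<subseteq> G"
      proof
        fix x assume xF: "x \<in> F"
        have xX: "x \<in> X" using xF FX by blast
        let ?A = "\<phi> (F - {x})"
        have FxX: "F - {x} \<subseteq> X" using FX by blast
        have AX: "?A \<subseteq> X" and Acl: "\<phi> ?A = ?A" by (rule clX[OF FxX], rule idem[OF FxX])
        have xA: "x \<notin> ?A" using False xF by blast
        have "\<phi> (F - {x}) \<subseteq> \<phi> F" by (rule mono[OF _ FX]) blast
        then have AK: "?A \<subseteq> ?K" using FKeq by simp
        have xK: "x \<in> ?K" using xF FK by blast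
        have AxX: "?A \<union> {x} \<subseteq> X" using AX xX by simp
        have Keq: "\<phi> (?A \<union> {x}) = ?K"
        proof
          have "?A \<union> {x} \<subseteq> ?K" using AK xK by simp
          then show "\<phi> (?A \<union> {x}) \<subseteq> ?K" by (rule least[OF _ KX Kcl])
          have "F - {x} \<subseteq> ?A" by (rule ext[OF FxX])
          then have "F \<subseteq> ?A \<union> {x}" by blast
          then have "\<phi> F \<subseteq> \<phi> (?A \<union> {x})" by (rule mono[OF _ AxX])
          then show "?K \<subseteq> \<phi> (?A \<union> {x})" using FKeq by simp
        qed
        show "x \<in> G" unfolding G_def
        proof (intro CollectI conjI xX notI)
          assume xin: "x \<in> \<phi> (\<phi> {x} - {x})"
          have KxX: "?K - {x} \<subseteq> X" using KX by blast
          have "\<phi> {x} \<subseteq> ?K" by (rule closed_sub[OF xX xK KX Kcl])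
          then have "\<phi> {x} - {x} \<subseteq> ?K - {x}" by blast
          then have "\<phi> (\<phi> {x} - {x}) \<subseteq> \<phi> (?K - {x})" by (rule mono[OF _ KxX])
          then have xK': "x \<in> \<phi> (?K - {x})" using xin by blast
          have "?A \<subseteq> ?K - {x}" using AK xA by blast
          then have "?A \<subseteq> \<phi> (?K - {x})" using ext[OF KxX] by (rule order.trans)
          then have "?A \<union> {x} \<subseteq> \<phi> (?K - {x})" using xK' by simp
          then have "\<phi> (?A \<union> {x}) \<subseteq> \<phi> (?K - {x})" by (rule least[OF _ clX[OF KxX] idem[OF KxX]])
          then have "?K \<subseteq> \<phi> (?K - {x})" using Keq by simp
          then obtain F' where F': "finite F'" "F' \<subseteq> ?K - {x}" "?K \<subseteq> \<phi> F'"
            using cover[OF cc KxX] by blast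
          have "F' \<subseteq> \<phi> (?A \<union> {x}) - {x}" using F'(2) Keq by simp
          then have nx: "x \<notin> \<phi> (?A \<union> F')" by (rule AE[OF F'(1) AX Acl xX xA])
          have F'X: "F' \<subseteq> X" using F'(2) KX by blast
          have AF'X: "?A \<union> F' \<subseteq> X" using AX F'X by simp
          have "\<phi> F' \<subseteq> \<phi> (?A \<union> F')" by (rule mono[OF _ AF'X]) blast
          then show False using F'(3) xK nx by blast
        qed
      qed
      then have "F \<subseteq> G \<inter> ?K" using FK by blast
      then have "\<phi> F \<subseteq> \<phi> (G \<inter> ?K)" by (rule mono[OF _ GKX])
      then show ?thesis using FKeq by simp
    qed
  qed
  obtain F where F: "finite F" "F \<subseteq> ?K" "?K \<subseteq> \<phi> F" using cover[OF cc KX] ext[OF KX] by blast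
  have "\<phi> F \<subseteq> ?K" by (rule least[OF F(2) KX Kcl])
  then have "\<phi> F = ?K" using F(3) by (rule antisym)
  then show ?thesis by (rule main[OF refl F(1) F(2)])
qed

lemma key_algebraic: assumes alg: "algebraic_lattice TYPE('a)" and CX: "C \<subseteq> X" and Ccl: "\<phi> C = C"
  shows "C \<subseteq> \<phi> (G \<inter> C)"
proof -
  obtain x where x: "f x = C" using fsurj CX Ccl by blast
  let ?T = "{c. compact_element c \<and> c \<le> x}"
  have "x = Sup ?T" using alg unfolding algebraic_lattice_def by blast
  then have C: "C = \<phi> (\<Union>(f ` ?T))" using x fSup by metis
  have GCX: "G \<inter> C \<subseteq> X" using CX by blast
  have "\<Union>(f ` ?T) \<subseteq> \<phi> (G \<inter> C)"
  proof
    fix z assume "z \<in> \<Union>(f ` ?T)"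
    then obtain c where c: "compact_element c" "c \<le> x" "z \<in> f c" by blast
    have "f c \<subseteq> C" using c fle x by blast
    then have "\<phi> (G \<inter> f c) \<subseteq> \<phi> (G \<inter> C)" using mono[OF _ GCX] by blast
    then show "z \<in> \<phi> (G \<inter> C)" using compact_key[OF c(1)] c by blast
  qed
  then have "\<phi> (\<Union>(f ` ?T)) \<subseteq> \<phi> (G \<inter> C)" by (rule least[OF _ clX[OF GCX] idem[OF GCX]])
  then show ?thesis using C by simp
qed

end

theorem corollary3p2:
  fixes f :: "'a::complete_lattice \<Rightarrow> 'b set"
    and X :: "'b set" and \<phi> :: "'b set \<Rightarrow> 'b set"
  assumes "convex_geometry X \<phi>"
    and "order_iso_to_closed_sets f X \<phi>"
    and "algebraic_lattice TYPE('a) \<or> order_scattered TYPE('a)"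
  shows "spatial TYPE('a)"
proof -
  interpret CG f X \<phi> using assms(1,2) by unfold_locales
  show ?thesis
    using assms(3) spatial_of_key key_scattered key_algebraic by blast
qed

end
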